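(* Let $(\tau_1,\tau_2)$ have a bivariate wide-sense geometric law with $\mathbb{P}(\tau_1>1)>0$ and $\mathbb{P}(\tau_2>1)>0$. Then the law of $(\tau_1,\tau_2)$ is a bivariate narrow-sense geometric law if and only if $\mathrm{Corr}[\tau_1,\tau_2]\ge0$. Explicitly, if $\mathrm{Corr}[\tau_1,\tau_2]\ge 0$ and $\tilde p_\emptyset>0$, then $(\tau_1,\tau_2)\sim\mathcal{G}^{\mathcal N}(p_{\{1\}},p_{\{2\}},p_{\{1,2\}})$ with $$p_{\{1\}}=\frac{\tilde p_\emptyset}{\tilde p_\emptyset+\tilde p_{\{1\}}},\quad p_{\{2\}}=\frac{\tilde p_\emptyset}{\tilde p_\emptyset+\tilde p_{\{2\}}},\quad p_{\{1,2\}}=\frac{(\tilde p_\emptyset+\tilde p_{\{1\}})(\tilde p_\emptyset+\tilde p_{\{2\}})}{\tilde p_\emptyset}.$$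
   Context: Narrow-sense law $\mathcal{G}^{\mathcal N}(\mathbf p)$ in dimension $2$: for $p_{\{1\}},p_{\{2\}},p_{\{1,2\}}\in[0,1]$ with $p_{\{1\}}p_{\{1,2\}}<1$, $p_{\{2\}}p_{\{1,2\}}<1$, take independent $E_I$ with $\mathbb{P}(E_I>n)=p_I^n$ and $\tau_1=\min(E_{\{1\}},E_{\{1,2\}})$, $\tau_2=\min(E_{\{2\}},E_{\{1,2\}})$. Wide-sense law in dimension 2: for $\tilde p_I\in[0,1]$, $I\subseteq\{1,2\}$, summing to $1$ with $\sum_{I\not\ni k}\tilde p_I<1$ ($k=1,2$), run i.i.d. trials with outcome $I$ of probability $\tilde p_I$, let $\tilde E_I$ be the first trial with outcome $I$, and $\tau_k=\min\{\tilde E_I:k\in I\}$; then $\mathbb{P}(\tau_1>i,\tau_2>j)=(\tilde p_\emptyset+\tilde p_{\{2\}})^{i-j}\tilde p_\emptyset^j$ for $i\ge j$ and $(\tilde p_\emptyset+\tilde p_{\{1\}})^{j-i}\tilde p_\emptyset^i$ for $i<j$. *)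

theory Defs
  imports "HOL-Probability.Probability"
begin

text \<open>Laws of random vectors (tau1, tau2) with values in {1,2,...}^2 are represented as
  pmfs on nat \<times> nat.  A law on nat \<times> nat is determined by its joint survival function
  (i, j) \<mapsto> P(tau1 > i, tau2 > j), i, j \<in> nat.\<close>

definition surv :: "(nat \<times> nat) pmf \<Rightarrow> nat \<Rightarrow> nat \<Rightarrow> real" where
  "surv M i j = measure_pmf.prob M {(a, b). a > i \<and> b > j}"

text \<open>Narrow-sense law G^N(p1, p2, p12): tau1 = min(E1, E12), tau2 = min(E2, E12) with
  independent E_I, P(E_I > n) = p_I^n; hence P(tau1 > i, tau2 > j) = p1^i p2^j p12^(max i j).\<close>

definition narrow_law :: "(nat \<times> nat) pmf \<Rightarrow> real \<Rightarrow> real \<Rightarrow> real \<Rightarrow> bool" where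
  "narrow_law M p1 p2 p12 \<longleftrightarrow>
     0 \<le> p1 \<and> p1 \<le> 1 \<and> 0 \<le> p2 \<and> p2 \<le> 1 \<and> 0 \<le> p12 \<and> p12 \<le> 1 \<and>
     p1 * p12 < 1 \<and> p2 * p12 < 1 \<and>
     (\<forall>i j. surv M i j = p1 ^ i * p2 ^ j * p12 ^ (max i j))"

definition is_narrow :: "(nat \<times> nat) pmf \<Rightarrow> bool" where
  "is_narrow M \<longleftrightarrow> (\<exists>p1 p2 p12. narrow_law M p1 p2 p12)"

text \<open>Wide-sense law with parameters q0 = p~_{}, q1 = p~_{1}, q2 = p~_{2}, q12 = p~_{1,2}.\<close>

definition wide_law :: "(nat \<times> nat) pmf \<Rightarrow> real \<Rightarrow> real \<Rightarrow> real \<Rightarrow> real \<Rightarrow> bool" where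
  "wide_law M q0 q1 q2 q12 \<longleftrightarrow>
     0 \<le> q0 \<and> q0 \<le> 1 \<and> 0 \<le> q1 \<and> q1 \<le> 1 \<and> 0 \<le> q2 \<and> q2 \<le> 1 \<and>
     0 \<le> q12 \<and> q12 \<le> 1 \<and> q0 + q1 + q2 + q12 = 1 \<and>
     q0 + q2 < 1 \<and> q0 + q1 < 1 \<and>
     (\<forall>i j. surv M i j =
        (if j \<le> i then (q0 + q2) ^ (i - j) * q0 ^ j else (q0 + q1) ^ (j - i) * q0 ^ i))"

definition cov :: "(nat \<times> nat) pmf \<Rightarrow> real" where
  "cov M = measure_pmf.expectation M (\<lambda>(a, b). real a * real b)
           - measure_pmf.expectation M (\<lambda>(a, b). real a) * measure_pmf.expectation M (\<lambda>(a, b). real b)"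

definition var1 :: "(nat \<times> nat) pmf \<Rightarrow> real" where
  "var1 M = measure_pmf.variance M (\<lambda>(a, b). real a)"

definition var2 :: "(nat \<times> nat) pmf \<Rightarrow> real" where
  "var2 M = measure_pmf.variance M (\<lambda>(a, b). real b)"

definition corr :: "(nat \<times> nat) pmf \<Rightarrow> real" where
  "corr M = cov M / sqrt (var1 M * var2 M)"

end

theory Submission
  imports Defs
begin

lemma pt_lin: "(\<Sum>i. (of_bool (i < n) :: ennreal)) = ennreal (real n)"
proof -
  have "(\<Sum>i. (of_bool (i < n) :: ennreal)) = (\<Sum>i\<in>{..<n}. of_bool (i < n))"
    by (rule suminf_finite) auto
  also have "\<dots> = of_nat n" by simp
  finally show ?thesis by (simp add: ennreal_of_nat_eq_real_of_nat)
qed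

lemma sum_odd: "(\<Sum>i<n. (2 * real i + 1)) = real n ^ 2"
  by (induction n) (auto simp: power2_eq_square algebra_simps)

lemma pt_sq: "(\<Sum>i. ennreal (2 * real i + 1) * of_bool (i < n)) = ennreal (real n ^ 2)"
proof -
  have "(\<Sum>i. ennreal (2 * real i + 1) * of_bool (i < n)) = (\<Sum>i\<in>{..<n}. ennreal (2 * real i + 1) * of_bool (i < n))"
    by (rule suminf_finite) auto
  also have "\<dots> = (\<Sum>i\<in>{..<n}. ennreal (2 * real i + 1))" by (intro sum.cong) auto
  also have "\<dots> = ennreal (\<Sum>i<n. (2 * real i + 1))" by (subst sum_ennreal) auto
  finally show ?thesis by (simp add: sum_odd)
qed

lemma sum_diag: "c \<le> a \<Longrightarrow> c \<le> b \<Longrightarrow> (\<Sum>m<c. (real (b - m) + real (a - m - 1))) = real c * (real a + real b - real c)"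
  by (induction c) (auto simp: of_nat_diff algebra_simps)

lemma pt_inner: "(\<Sum>k. (of_bool (m < a \<and> m + k < b) + of_bool (m + k + 1 < a \<and> m < b) :: ennreal))
   = ennreal (if m < a \<and> m < b then real (b - m) + real (a - m - 1) else 0)"
proof -
  have "(\<Sum>k. (of_bool (m < a \<and> m + k < b) + of_bool (m + k + 1 < a \<and> m < b) :: ennreal))
     = (\<Sum>k\<in>{..<a+b}. (of_bool (m < a \<and> m + k < b) + of_bool (m + k + 1 < a \<and> m < b)))"
    by (rule suminf_finite) auto
  also have "\<dots> = of_nat (card ({..<a+b} \<inter> {k. m < a \<and> m + k < b})) + of_nat (card ({..<a+b} \<inter> {k. m + k + 1 < a \<and> m < b}))"
    by (simp add: sum.distrib)
  also have "\<dots> = ennreal (if m < a \<and> m < b then real (b - m) + real (a - m - 1) else 0)"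
  proof (cases "m < a \<and> m < b")
    case True
    have "{..<a+b} \<inter> {k. m < a \<and> m + k < b} = {..<b-m}" using True by auto
    moreover have "{..<a+b} \<inter> {k. m + k + 1 < a \<and> m < b} = {..<a-m-1}" using True by auto
    ultimately show ?thesis using True by (simp add: ennreal_of_nat_eq_real_of_nat ennreal_plus[symmetric])
  next
    case False
    then have "{..<a+b} \<inter> {k. m < a \<and> m + k < b} = {}" "{..<a+b} \<inter> {k. m + k + 1 < a \<and> m < b} = {}" by auto
    then show ?thesis using False by simp
  qed
  finally show ?thesis .
qed

lemma pt_prod: "(\<Sum>m. \<Sum>k. (of_bool (m < a \<and> m + k < b) + of_bool (m + k + 1 < a \<and> m < b) :: ennreal))
   = ennreal (real a * real b)"
proof -
  let ?c = "min a b"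
  have "(\<Sum>m. \<Sum>k. (of_bool (m < a \<and> m + k < b) + of_bool (m + k + 1 < a \<and> m < b) :: ennreal))
    = (\<Sum>m. ennreal (if m < a \<and> m < b then real (b - m) + real (a - m - 1) else 0))"
    by (simp only: pt_inner)
  also have "\<dots> = (\<Sum>m\<in>{..<?c}. ennreal (if m < a \<and> m < b then real (b - m) + real (a - m - 1) else 0))"
    by (rule suminf_finite) auto
  also have "\<dots> = (\<Sum>m\<in>{..<?c}. ennreal (real (b - m) + real (a - m - 1)))"
    by (intro sum.cong) auto
  also have "\<dots> = ennreal (\<Sum>m<?c. (real (b - m) + real (a - m - 1)))"
    by (subst sum_ennreal) auto
  also have "\<dots> = ennreal (real a * real b)"
    by (subst sum_diag) (auto simp: min_def algebra_simps)
  finally show ?thesis .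
qed


lemma prob_pos_ex: "measure_pmf.prob M A > 0 \<Longrightarrow> \<exists>x\<in>set_pmf M. x \<in> A"
  by (metis Int_emptyI less_irrefl measure_Int_set_pmf measure_empty)

lemma geo_marg:
  fixes M :: "'a pmf" and X :: "'a \<Rightarrow> nat" and r :: real
  assumes tail: "\<And>i. measure_pmf.prob M {x. X x > i} = r ^ i" and r: "0 < r" "r < 1"
  shows "integrable M (\<lambda>x. real (X x))"
    and "measure_pmf.expectation M (\<lambda>x. real (X x)) = 1 / (1 - r)"
    and "measure_pmf.variance M (\<lambda>x. real (X x)) > 0"
proof -
  have "(\<integral>\<^sup>+x. ennreal (real (X x)) \<partial>M) = (\<integral>\<^sup>+x. (\<Sum>i. indicator {x. i < X x} x) \<partial>M)"
    by (simp add: pt_lin indicator_def)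
  also have "\<dots> = (\<Sum>i. emeasure M {x. i < X x})"
    by (subst nn_integral_suminf) auto
  also have "\<dots> = (\<Sum>i. ennreal (r ^ i))"
    by (simp add: measure_pmf.emeasure_eq_measure tail)
  also have "\<dots> = ennreal (1 / (1 - r))"
    using r by (intro suminf_ennreal_eq geometric_sums) auto
  finally have "integrable M (\<lambda>x. real (X x)) \<and> measure_pmf.expectation M (\<lambda>x. real (X x)) = 1 / (1 - r)"
    using r by (subst nn_integral_eq_integrable[symmetric]) auto
  then show i1: "integrable M (\<lambda>x. real (X x))" and e1: "measure_pmf.expectation M (\<lambda>x. real (X x)) = 1 / (1 - r)"
    by auto
  have "(\<integral>\<^sup>+x. ennreal (real (X x) ^ 2) \<partial>M) = (\<integral>\<^sup>+x. (\<Sum>i. ennreal (2 * real i + 1) * indicator {x. i < X x} x) \<partial>M)"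
    by (intro nn_integral_cong) (simp only: indicator_def mem_Collect_eq pt_sq)
  also have "\<dots> = (\<Sum>i. ennreal (2 * real i + 1) * emeasure M {x. i < X x})"
    by (subst nn_integral_suminf) (auto simp: nn_integral_cmult)
  also have "\<dots> = (\<Sum>i. ennreal ((2 * real i + 1) * r ^ i))"
    using r by (simp add: measure_pmf.emeasure_eq_measure tail ennreal_mult)
  also have "\<dots> = ennreal (2 * (1 / (1 - r)^2) - 1 / (1 - r))"
  proof (intro suminf_ennreal_eq)
    show "(\<lambda>i. (2 * real i + 1) * r ^ i) sums (2 * (1 / (1 - r)^2) - 1 / (1 - r))"
    proof -
      have "(\<lambda>i. 2 * (real (Suc i) * r ^ i) - r ^ i) sums (2 * (1 / (1 - r)^2) - 1 / (1 - r))"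
        using r by (intro sums_diff sums_mult geometric_deriv_sums geometric_sums) auto
      then show ?thesis by (simp add: algebra_simps)
    qed
  qed (use r in auto)
  finally have I2: "(\<integral>\<^sup>+x. ennreal (real (X x) ^ 2) \<partial>M) = ennreal (2 * (1 / (1 - r)^2) - 1 / (1 - r))" .
  have "1 / (1 - r) \<le> 2 / (1 - r)^2"
  proof -
    have "1 / (1 - r) = (1 - r) / (1 - r)^2" using r by (simp add: power2_eq_square)
    also have "\<dots> \<le> 2 / (1 - r)^2" using r by (intro divide_right_mono) auto
    finally show ?thesis .
  qed
  then have "integrable M (\<lambda>x. real (X x) ^ 2)"
    using I2 by (subst (asm) nn_integral_eq_integrable) auto
  define \<mu> where "\<mu> = measure_pmf.expectation M (\<lambda>x. real (X x))"
  have isq: "integrable M (\<lambda>x. (real (X x) - \<mu>) ^ 2)"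
  proof -
    have "integrable M (\<lambda>x. real (X x) ^ 2 - 2 * \<mu> * real (X x) + \<mu> ^ 2)"
      using \<open>integrable M (\<lambda>x. real (X x) ^ 2)\<close> i1 by (intro Bochner_Integration.integrable_add Bochner_Integration.integrable_diff Bochner_Integration.integrable_mult_right measure_pmf.integrable_const) auto
    then show ?thesis by (simp add: power2_diff algebra_simps)
  qed
  have nn: "measure_pmf.variance M (\<lambda>x. real (X x)) \<ge> 0"
    by (intro integral_nonneg_AE) auto
  moreover have "measure_pmf.variance M (\<lambda>x. real (X x)) \<noteq> 0"
  proof
    assume "measure_pmf.variance M (\<lambda>x. real (X x)) = 0"
    then have "AE x in M. (real (X x) - \<mu>) ^ 2 = 0"
      using isq unfolding \<mu>_def by (subst (asm) integral_nonneg_eq_0_iff_AE) auto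
    then have all: "\<forall>y\<in>set_pmf M. real (X y) = \<mu>" by (simp add: AE_measure_pmf_iff)
    have "measure_pmf.prob M {x. X x > 1} > 0" using tail[of 1] r by simp
    then obtain y1 where y1: "y1 \<in> set_pmf M" "X y1 > 1" using prob_pos_ex by blast
    have "measure_pmf.prob M (UNIV - {x. X x > 1}) = 1 - r"
      using measure_pmf.prob_compl[of "{x. X x > 1}"] tail[of 1] by simp
    then have "measure_pmf.prob M (UNIV - {x. X x > 1}) > 0" using r by simp
    then obtain y2 where y2: "y2 \<in> set_pmf M" "\<not> X y2 > 1" using prob_pos_ex by blast
    from all y1 y2 have "real (X y1) = real (X y2)" by simp
    with y1 y2 show False by simp
  qed
  ultimately show "measure_pmf.variance M (\<lambda>x. real (X x)) > 0" by linarith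
qed


lemma narrow_id:
  fixes A B q0 :: real
  assumes "A > 0" "B > 0" "q0 > 0"
  shows "(q0 / B) ^ i * (q0 / A) ^ j * (B * A / q0) ^ (max i j) =
         (if j \<le> i then A ^ (i - j) * q0 ^ j else B ^ (j - i) * q0 ^ i)"
proof (cases "j \<le> i")
  case True
  then obtain k where i: "i = j + k" using le_Suc_ex by blast
  have "(q0 / B) ^ i * (q0 / A) ^ j * (B * A / q0) ^ (max i j) = ((q0 / B) * (B * A / q0)) ^ (j + k) * (q0 / A) ^ j"
  proof -
    have "max i j = j + k" using i by simp
    then show ?thesis using i by (simp only: power_mult_distrib ac_simps)
  qed
  also have "(q0 / B) * (B * A / q0) = A" using assms by (simp add: field_simps)
  also have "A ^ (j + k) * (q0 / A) ^ j = A ^ k * (A * (q0 / A)) ^ j"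
    by (simp only: power_add power_mult_distrib ac_simps)
  also have "A * (q0 / A) = q0" using assms by simp
  finally show ?thesis using True i by simp
next
  case False
  then obtain k where j: "j = i + k" using le_Suc_ex by (metis nat_le_linear)
  have "(q0 / B) ^ i * (q0 / A) ^ j * (B * A / q0) ^ (max i j) = ((q0 / A) * (B * A / q0)) ^ (i + k) * (q0 / B) ^ i"
  proof -
    have "max i j = i + k" using j by simp
    then show ?thesis using j by (simp only: power_mult_distrib ac_simps)
  qed
  also have "(q0 / A) * (B * A / q0) = B" using assms by (simp add: field_simps)
  also have "B ^ (i + k) * (q0 / B) ^ i = B ^ k * (B * (q0 / B)) ^ i"
    by (simp only: power_add power_mult_distrib ac_simps)
  also have "B * (q0 / B) = q0" using assms by simp
  finally show ?thesis using False j by simp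
qed


lemma covid: fixes x y z :: real assumes "x < 1" "y < 1" "z < 1"
  shows "(1/(1-y) + x/(1-x))/(1-z) - 1/(1-x)*(1/(1-y)) = (z - x*y)/((1-z)*(1-x)*(1-y))"
proof -
  have a: "1 - x \<noteq> 0" "1 - y \<noteq> 0" "1 - z \<noteq> 0" using assms by auto
  show ?thesis using a by (simp add: divide_simps) (simp add: algebra_simps)
qed

theorem mainTheorem9:
  fixes M :: "(nat \<times> nat) pmf" and q0 q1 q2 q12 :: real
  assumes wide: "wide_law M q0 q1 q2 q12"
    and pos1: "measure_pmf.prob M {(a, b). a > 1} > 0"
    and pos2: "measure_pmf.prob M {(a, b). b > 1} > 0"
  shows "(is_narrow M \<longleftrightarrow> corr M \<ge> 0) \<and>
         (corr M \<ge> 0 \<and> q0 > 0 \<longrightarrow>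
            narrow_law M (q0 / (q0 + q1)) (q0 / (q0 + q2)) ((q0 + q1) * (q0 + q2) / q0))"
proof -
  define A where "A = q0 + q2"
  define B where "B = q0 + q1"
  have par: "0 \<le> q0" "q0 \<le> 1" "0 \<le> q1" "0 \<le> q2" "0 \<le> q12" "A < 1" "B < 1"
    using wide unfolding wide_law_def A_def B_def by auto
  have S: "\<And>i j. surv M i j = (if j \<le> i then A ^ (i - j) * q0 ^ j else B ^ (j - i) * q0 ^ i)"
    using wide unfolding wide_law_def A_def B_def by auto
  have "measure_pmf.prob M {(a, b). a > 0 \<and> b > 0} = 1"
    using S[of 0 0] by (simp add: surv_def)
  then have AE: "AE x in M. x \<in> {(a, b). a > 0 \<and> b > 0}"
    by (rule measure_pmf.AE_prob_1)
  have t1: "measure_pmf.prob M {x. fst x > i} = A ^ i" for i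
  proof -
    have "measure_pmf.prob M {x. fst x > i} = measure_pmf.prob M {(a, b). a > i \<and> b > 0}"
      by (rule measure_pmf.finite_measure_eq_AE) (use AE in auto)
    then show ?thesis using S[of i 0] by (simp add: surv_def)
  qed
  have t2: "measure_pmf.prob M {x. snd x > j} = B ^ j" for j
  proof -
    have "measure_pmf.prob M {x. snd x > j} = measure_pmf.prob M {(a, b). a > 0 \<and> b > j}"
      by (rule measure_pmf.finite_measure_eq_AE) (use AE in auto)
    then show ?thesis using S[of 0 j] by (cases j) (auto simp: surv_def)
  qed
  have "{(a, b). a > (1::nat)} = {x::nat\<times>nat. fst x > 1}" by auto
  then have Apos: "A > 0" using pos1 t1[of 1] by simp
  have "{(a, b). b > (1::nat)} = {x::nat\<times>nat. snd x > 1}" by auto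
  then have Bpos: "B > 0" using pos2 t2[of 1] by simp
  have f1: "(\<lambda>(a, b). real a) = (\<lambda>x::nat\<times>nat. real (fst x))" by auto
  have f2: "(\<lambda>(a, b). real b) = (\<lambda>x::nat\<times>nat. real (snd x))" by auto
  have E1: "measure_pmf.expectation M (\<lambda>(a, b). real a) = 1 / (1 - A)"
    and V1: "var1 M > 0"
    using geo_marg[of M fst A] t1 Apos par unfolding var1_def f1 by auto
  have E2: "measure_pmf.expectation M (\<lambda>(a, b). real b) = 1 / (1 - B)"
    and V2: "var2 M > 0"
    using geo_marg[of M snd B] t2 Bpos par unfolding var2_def f2 by auto
  define C where "C = 1 / (1 - B) + A / (1 - A)"
  have Cnn: "C \<ge> 0" using par Apos unfolding C_def by auto
  have q0lt: "q0 < 1" using par Bpos unfolding B_def by linarith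
  define S1 where "S1 m k = {(a, b). a > m \<and> b > m + k}" for m k :: nat
  define S2 where "S2 m k = {(a, b). a > m + k + 1 \<and> b > m}" for m k :: nat
  have "(\<integral>\<^sup>+x. ennreal ((\<lambda>(a, b). real a * real b) x) \<partial>M)
      = (\<integral>\<^sup>+x. (\<Sum>m. \<Sum>k. (indicator (S1 m k) x + indicator (S2 m k) x)) \<partial>M)"
  proof (intro nn_integral_cong)
    fix x :: "nat \<times> nat"
    obtain a b where x: "x = (a, b)" by (cases x)
    show "ennreal ((\<lambda>(a, b). real a * real b) x) = (\<Sum>m. \<Sum>k. (indicator (S1 m k) x + indicator (S2 m k) x))"
      unfolding x S1_def S2_def indicator_def using pt_prod[of a b] by simp
  qed
  also have "\<dots> = (\<Sum>m. \<Sum>k. (emeasure M (S1 m k) + emeasure M (S2 m k)))"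
    by (simp add: nn_integral_suminf nn_integral_add)
  also have "\<dots> = (\<Sum>m. \<Sum>k. ennreal (q0 ^ m * B ^ k + (q0 ^ m * A) * A ^ k))"
  proof -
    have "emeasure M (S1 m k) + emeasure M (S2 m k) = ennreal (q0 ^ m * B ^ k + (q0 ^ m * A) * A ^ k)" for m k
    proof -
      have "emeasure M (S1 m k) = ennreal (surv M m (m + k))"
        by (simp add: measure_pmf.emeasure_eq_measure surv_def S1_def)
      also have "surv M m (m + k) = q0 ^ m * B ^ k" using S[of m "m + k"] by (cases k) auto
      finally have 1: "emeasure M (S1 m k) = ennreal (q0 ^ m * B ^ k)" .
      have "emeasure M (S2 m k) = ennreal (surv M (m + k + 1) m)"
        by (simp add: measure_pmf.emeasure_eq_measure surv_def S2_def)
      also have "surv M (m + k + 1) m = (q0 ^ m * A) * A ^ k" using S[of "m + k + 1" m] by simp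
      finally have 2: "emeasure M (S2 m k) = ennreal ((q0 ^ m * A) * A ^ k)" .
      show ?thesis unfolding 1 2 using par Apos Bpos by (intro ennreal_plus[symmetric]) auto
    qed
    then show ?thesis by simp
  qed
  also have "\<dots> = (\<Sum>m. ennreal (q0 ^ m * C))"
  proof -
    have "(\<Sum>k. ennreal (q0 ^ m * B ^ k + (q0 ^ m * A) * A ^ k)) = ennreal (q0 ^ m * C)" for m
    proof (rule suminf_ennreal_eq)
      have "(\<lambda>k. q0 ^ m * B ^ k + (q0 ^ m * A) * A ^ k) sums (q0 ^ m * (1 / (1 - B)) + (q0 ^ m * A) * (1 / (1 - A)))"
        using par Apos Bpos by (intro sums_add sums_mult geometric_sums) auto
      then show "(\<lambda>k. q0 ^ m * B ^ k + (q0 ^ m * A) * A ^ k) sums (q0 ^ m * C)"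
        by (simp add: C_def algebra_simps)
    qed (use par Apos Bpos in auto)
    then show ?thesis by simp
  qed
  also have "\<dots> = ennreal (C / (1 - q0))"
  proof (rule suminf_ennreal_eq)
    have "(\<lambda>m. q0 ^ m * C) sums ((1 / (1 - q0)) * C)"
      using par q0lt by (intro sums_mult2 geometric_sums) auto
    then show "(\<lambda>m. q0 ^ m * C) sums (C / (1 - q0))" by simp
  qed (use par Cnn in auto)
  finally have "measure_pmf.expectation M (\<lambda>(a, b). real a * real b) = C / (1 - q0)"
    using Cnn q0lt by (subst (asm) nn_integral_eq_integrable) (auto split: prod.splits)
  then have "cov M = C / (1 - q0) - 1 / (1 - A) * (1 / (1 - B))"
    unfolding cov_def E1 E2 by simp
  then have cov: "cov M = (q0 - A * B) / ((1 - q0) * (1 - A) * (1 - B))"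
    unfolding C_def using covid[of A B q0] par q0lt by simp
  have covpos: "cov M \<ge> 0 \<longleftrightarrow> A * B \<le> q0"
  proof -
    have "(1 - q0) * (1 - A) * (1 - B) > 0" using par q0lt by simp
    then show ?thesis unfolding cov by (simp add: zero_le_divide_iff)
  qed
  have corrpos: "corr M \<ge> 0 \<longleftrightarrow> A * B \<le> q0"
  proof -
    have "sqrt (var1 M * var2 M) > 0" using V1 V2 by simp
    then show ?thesis unfolding corr_def covpos[symmetric] by (simp add: zero_le_divide_iff)
  qed
  have nar: "narrow_law M (q0 / B) (q0 / A) (B * A / q0)" if ab: "A * B \<le> q0"
  proof -
    have q0pos: "q0 > 0" using ab Apos Bpos by (smt (verit) mult_pos_pos)
    have "q0 \<le> B" "q0 \<le> A" using par unfolding A_def B_def by auto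
    moreover have "B * A / q0 \<le> 1" using ab q0pos by (simp add: mult.commute)
    moreover have "q0 / B * (B * A / q0) = A" "q0 / A * (B * A / q0) = B"
      using q0pos Apos Bpos by (auto simp: field_simps)
    moreover have "\<forall>i j. surv M i j = (q0 / B) ^ i * (q0 / A) ^ j * (B * A / q0) ^ max i j"
      unfolding S narrow_id[OF Apos Bpos q0pos] by simp
    moreover have "0 \<le> q0 / B" "0 \<le> q0 / A" "0 \<le> B * A / q0" "q0 / B \<le> 1" "q0 / A \<le> 1"
      using q0pos Apos Bpos \<open>q0 \<le> B\<close> \<open>q0 \<le> A\<close> by auto
    ultimately show ?thesis
      unfolding narrow_law_def using par by simp
  qed
  have "is_narrow M \<longleftrightarrow> A * B \<le> q0"
  proof
    assume "is_narrow M"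
    then obtain p1 p2 p12 where n: "narrow_law M p1 p2 p12" unfolding is_narrow_def by blast
    then have N: "\<And>i j. surv M i j = p1 ^ i * p2 ^ j * p12 ^ max i j" and p12: "0 \<le> p12" "p12 \<le> 1"
      unfolding narrow_law_def by auto
    have "A = p1 * p12" using N[of 1 0] S[of 1 0] by simp
    moreover have "B = p2 * p12" using N[of 0 1] S[of 0 1] by simp
    moreover have "q0 = p1 * p2 * p12" using N[of 1 1] S[of 1 1] by simp
    ultimately have "A * B = q0 * p12" by (simp add: algebra_simps)
    then show "A * B \<le> q0" using p12 par by (metis mult_left_le)
  next
    assume "A * B \<le> q0"
    then show "is_narrow M" using nar unfolding is_narrow_def by blast
  qed
  then show ?thesis using corrpos nar unfolding A_def B_def by (auto simp: mult.commute)
qed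

end
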